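(* Let $t\ge 2$ be a real number. Every poset $\mathbf{P}$ that has an interval representation in which every interval has length in $[1,t]$ satisfies $\dim(\mathbf{P})\le 2\lceil\lg\lg t\rceil+4$; that is, $f(C[1,t])\le 2\lceil\lg\lg t\rceil+4$.
   Context: $\lg$ denotes the logarithm of base $2$. An interval representation of a poset $(X,P)$ assigns to each $x\in X$ a closed real interval $[l_x,r_x]$ such that $x<y$ in $P$ iff $r_x<l_y$; the length is $r_x-l_x$. $C[\alpha,\beta]$ is the class of posets having an interval representation with all lengths in $[\alpha,\beta]$, and $f(C[\alpha,\beta])$ is the least upper bound of the dimensions of posets in $C[\alpha,\beta]$. The dimension of a poset is the minimum number of linear extensions whose intersection is the partial order. *)

theory Defs
  imports Complex_Main
begin

definition strict_poset :: "'a set \<Rightarrow> ('a \<Rightarrow> 'a \<Rightarrow> bool) \<Rightarrow> bool" where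
  "strict_poset X P \<longleftrightarrow>
     (\<forall>x\<in>X. \<not> P x x) \<and>
     (\<forall>x\<in>X. \<forall>y\<in>X. \<forall>z\<in>X. P x y \<longrightarrow> P y z \<longrightarrow> P x z)"

definition interval_rep_len ::
  "'a set \<Rightarrow> ('a \<Rightarrow> 'a \<Rightarrow> bool) \<Rightarrow> real \<Rightarrow> real \<Rightarrow> ('a \<Rightarrow> real) \<Rightarrow> ('a \<Rightarrow> real) \<Rightarrow> bool" where
  "interval_rep_len X P \<alpha> \<beta> l r \<longleftrightarrow>
     (\<forall>x\<in>X. l x \<le> r x \<and> \<alpha> \<le> r x - l x \<and> r x - l x \<le> \<beta>) \<and>
     (\<forall>x\<in>X. \<forall>y\<in>X. P x y \<longleftrightarrow> r x < l y)"

definition in_class_C :: "'a set \<Rightarrow> ('a \<Rightarrow> 'a \<Rightarrow> bool) \<Rightarrow> real \<Rightarrow> real \<Rightarrow> bool" where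
  "in_class_C X P \<alpha> \<beta> \<longleftrightarrow> (\<exists>l r. interval_rep_len X P \<alpha> \<beta> l r)"

definition linear_extension :: "'a set \<Rightarrow> ('a \<Rightarrow> 'a \<Rightarrow> bool) \<Rightarrow> ('a \<Rightarrow> 'a \<Rightarrow> bool) \<Rightarrow> bool" where
  "linear_extension X P L \<longleftrightarrow>
     (\<forall>x\<in>X. \<not> L x x) \<and>
     (\<forall>x\<in>X. \<forall>y\<in>X. \<forall>z\<in>X. L x y \<longrightarrow> L y z \<longrightarrow> L x z) \<and>
     (\<forall>x\<in>X. \<forall>y\<in>X. x \<noteq> y \<longrightarrow> L x y \<or> L y x) \<and>
     (\<forall>x\<in>X. \<forall>y\<in>X. P x y \<longrightarrow> L x y)"

definition realizer :: "'a set \<Rightarrow> ('a \<Rightarrow> 'a \<Rightarrow> bool) \<Rightarrow> ('a \<Rightarrow> 'a \<Rightarrow> bool) set \<Rightarrow> bool" where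
  "realizer X P Ls \<longleftrightarrow>
     (\<forall>L\<in>Ls. linear_extension X P L) \<and>
     (\<forall>x\<in>X. \<forall>y\<in>X. P x y \<longleftrightarrow> (\<forall>L\<in>Ls. L x y))"

definition poset_dim :: "'a set \<Rightarrow> ('a \<Rightarrow> 'a \<Rightarrow> bool) \<Rightarrow> nat" where
  "poset_dim X P = (LEAST d. \<exists>Ls. finite Ls \<and> card Ls = d \<and> realizer X P Ls)"

end

theory Submission
  imports Defs
begin

lemma bits_differ:
  fixes i j k :: nat
  assumes "i < 2^k" "j < 2^k" "i \<noteq> j"
  shows "\<exists>b<k. bit i b \<noteq> bit j b"
proof (rule ccontr)
  assume "\<not> ?thesis"
  then have "\<forall>b. bit (take_bit k i) b = bit (take_bit k j) b"
    by (auto simp: bit_take_bit_iff)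
  then have "take_bit k i = take_bit k j" by (simp add: bit_eq_iff)
  with assms show False by (simp add: take_bit_nat_eq_self)
qed

lemma band_exists:
  fixes lam :: real
  assumes "1 \<le> lam" "lam \<le> 2^(Suc n)"
  shows "\<exists>i<Suc n. 2^i \<le> lam \<and> lam \<le> 2^(Suc i)"
  using assms
proof (induction n)
  case 0 then show ?case by auto
next
  case (Suc n)
  show ?case
  proof (cases "lam \<le> 2^(Suc n)")
    case True with Suc show ?thesis by (meson less_SucI)
  next
    case False with Suc show ?thesis by auto
  qed
qed

lemma t_bound:
  fixes t :: real
  assumes "t \<ge> 2"
  shows "t \<le> 2 ^ (2 ^ nat \<lceil>log 2 (log 2 t)\<rceil>)"
proof -
  have l1: "log 2 t \<ge> 1" using assms by simp
  have "log 2 (log 2 t) \<ge> 0" using l1 by simp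
  then have c0: "\<lceil>log 2 (log 2 t)\<rceil> \<ge> 0" by simp
  have "log 2 (log 2 t) \<le> real (nat \<lceil>log 2 (log 2 t)\<rceil>)" using c0
    by (metis le_of_int_ceiling of_int_of_nat_eq int_nat_eq)
  then have "log 2 t \<le> 2 powr real (nat \<lceil>log 2 (log 2 t)\<rceil>)"
    using l1 log_le_iff[of 2 "log 2 t" "real (nat \<lceil>log 2 (log 2 t)\<rceil>)"] by linarith
  then have "log 2 t \<le> 2 ^ nat \<lceil>log 2 (log 2 t)\<rceil>"
    by (simp add: powr_realpow)
  then have "t \<le> 2 powr (2 ^ nat \<lceil>log 2 (log 2 t)\<rceil>)"
    using assms log_le_iff[of 2 t] by simp
  then show ?thesis by (metis powr_realpow zero_less_numeral of_nat_numeral of_nat_power)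
qed

definition lexL :: "('a \<Rightarrow> real) \<Rightarrow> ('a \<Rightarrow> real) \<Rightarrow> ('a \<Rightarrow> real) \<Rightarrow> 'a \<Rightarrow> 'a \<Rightarrow> bool" where
  "lexL p s q x y \<longleftrightarrow> p x < p y \<or> (p x = p y \<and> (s x < s y \<or> (s x = s y \<and> q x < q y)))"

definition setL :: "('a \<Rightarrow> real) \<Rightarrow> ('a \<Rightarrow> real) \<Rightarrow> ('a \<Rightarrow> real) \<Rightarrow> ('a \<Rightarrow> bool) \<Rightarrow> 'a \<Rightarrow> 'a \<Rightarrow> bool" where
  "setL l r q A = lexL (\<lambda>z. if A z then l z else r z) (\<lambda>z. if A z then - r z else - l z) (\<lambda>z. - q z)"

lemma lexL_ext:
  assumes "\<forall>z\<in>X. l z \<le> p z \<and> p z \<le> r z" "inj_on q X"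
    "\<forall>x\<in>X. \<forall>y\<in>X. P x y \<longleftrightarrow> r x < l y"
  shows "linear_extension X P (lexL p s q)"
  unfolding linear_extension_def
proof (intro conjI)
  show "\<forall>x\<in>X. \<not> lexL p s q x x" by (simp add: lexL_def)
  show "\<forall>x\<in>X. \<forall>y\<in>X. \<forall>z\<in>X. lexL p s q x y \<longrightarrow> lexL p s q y z \<longrightarrow> lexL p s q x z"
    unfolding lexL_def by auto
  show "\<forall>x\<in>X. \<forall>y\<in>X. x \<noteq> y \<longrightarrow> lexL p s q x y \<or> lexL p s q y x"
    using assms(2) unfolding lexL_def inj_on_def by (metis linorder_neqE_linordered_idom)
  show "\<forall>x\<in>X. \<forall>y\<in>X. P x y \<longrightarrow> lexL p s q x y"
  proof (intro ballI impI)
    fix x y assume "x \<in> X" "y \<in> X" "P x y"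
    then have "r x < l y" using assms(3) by blast
    moreover have "p x \<le> r x" "l y \<le> p y" using assms(1) \<open>x \<in> X\<close> \<open>y \<in> X\<close> by auto
    ultimately have "p x < p y" by linarith
    then show "lexL p s q x y" by (simp add: lexL_def)
  qed
qed

lemma setL_ext:
  assumes "\<forall>z\<in>X. l z \<le> r z" "inj_on q X"
    "\<forall>x\<in>X. \<forall>y\<in>X. P x y \<longleftrightarrow> r x < l y"
  shows "linear_extension X P (setL l r q A)"
  unfolding setL_def
proof (rule lexL_ext[OF _ _ assms(3)])
  show "inj_on (\<lambda>z. - q z) X" using assms(2) by (simp add: inj_on_def)
qed (use assms(1) in auto)

lemma setL_in_out: "A x \<Longrightarrow> \<not> A y \<Longrightarrow> l x < r y \<or> (l x = r y \<and> l y < r x) \<Longrightarrow> setL l r q A x y"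
  unfolding setL_def lexL_def by auto

lemma setL_in_in: "A x \<Longrightarrow> A y \<Longrightarrow> l x < l y \<or> (l x = l y \<and> r y < r x) \<Longrightarrow> setL l r q A x y"
  unfolding setL_def lexL_def by auto

lemma setL_out_out: "\<not> A x \<Longrightarrow> \<not> A y \<Longrightarrow> r x < r y \<or> (r x = r y \<and> l y < l x) \<Longrightarrow> setL l r q A x y"
  unfolding setL_def lexL_def by auto

lemma setL_tie: "A x = A y \<Longrightarrow> l x = l y \<Longrightarrow> r x = r y \<Longrightarrow> q y < q x \<Longrightarrow> setL l r q A x y"
  unfolding setL_def lexL_def by auto

lemma core:
  fixes l r q :: "'a \<Rightarrow> real" and band :: "'a \<Rightarrow> nat" and k :: nat and e :: "'a \<Rightarrow> int"
  assumes e_def: "\<forall>z. e z = \<lceil>l z / 2 ^ band z\<rceil>"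
    and len: "\<forall>z\<in>X. 1 \<le> r z - l z"
    and bw: "\<forall>z\<in>X. 2 ^ band z \<le> r z - l z \<and> r z - l z \<le> 2 * 2 ^ band z"
    and injq: "inj_on q X"
    and bsame: "\<forall>x\<in>X. \<forall>y\<in>X. r x - l x = r y - l y \<longrightarrow> band x = band y"
    and bits: "\<forall>x\<in>X. \<forall>y\<in>X. band x \<noteq> band y \<longrightarrow> (\<exists>b<k. bit (band x) b \<noteq> bit (band y) b)"
    and xX: "x \<in> X" and yX: "y \<in> X" and xy: "x \<noteq> y" and o1: "l x \<le> r y" and o2: "l y \<le> r x"
  shows "lexL (\<lambda>z. of_int (e z) * 2 ^ band z) (\<lambda>z. - l z) q x y
     \<or> (\<exists>j\<in>{0,1,2::int}. setL l r q (\<lambda>z. e z mod 3 = j) x y)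
     \<or> (\<exists>b<k. \<exists>v. setL l r q (\<lambda>z. bit (band z) b = v) x y)"
proof -
  let ?R = "\<lambda>j. setL l r q (\<lambda>z. e z mod 3 = j) x y"
  have lx: "1 \<le> r x - l x" and ly: "1 \<le> r y - l y" using len xX yX by auto
  have jx: "e x mod 3 \<in> {0,1,2::int}" by auto
  have jy: "(e y + 1) mod 3 \<in> {0,1,2::int}" by auto
  have ny: "e y mod 3 \<noteq> (e y + 1) mod 3" by presburger
  have Rx: "?thesis" if a: "?R (e x mod 3)"
    by (rule disjI2, rule disjI1, rule bexI[where x="e x mod 3"], rule a, rule jx)
  have Ry: "?thesis" if a: "?R ((e y + 1) mod 3)"
    by (rule disjI2, rule disjI1, rule bexI[where x="(e y + 1) mod 3"], rule a, rule jy)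
  have Ry': "?R ((e y + 1) mod 3)" if "r x < r y \<or> (r x = r y \<and> l y < l x)" "l x < r y"
  proof (cases "e x mod 3 = (e y + 1) mod 3")
    case True
    then show ?thesis using ny that by (intro setL_in_out) auto
  next
    case False
    then show ?thesis using ny that by (intro setL_out_out) auto
  qed
  have Rx': "?R (e x mod 3)" if "l x < l y \<or> (l x = l y \<and> r y < r x)" "l x < r y \<or> (l x = r y \<and> l y < r x)"
  proof (cases "e y mod 3 = e x mod 3")
    case True
    then show ?thesis using that by (intro setL_in_in) auto
  next
    case False
    then show ?thesis using that by (intro setL_in_out) auto
  qed
  consider "l x < l y" | "l x = l y" "r x < r y" | "l x = l y" "r x = r y" | "l x = l y" "r y < r x"
    | "l y < l x" "r x \<le> r y" | "l y < l x" "r y < r x" by linarith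
  then show ?thesis
  proof cases
    case 1
    show ?thesis by (rule Rx, rule Rx') (use 1 lx ly in auto)
  next
    case 2
    show ?thesis by (rule Ry, rule Ry') (use 2 lx ly in auto)
  next
    case 3
    have "r x - l x = r y - l y" using 3 by simp
    then have bxy: "band x = band y" using bsame xX yX by blast
    then have ee: "e x = e y" using 3 by (simp add: e_def)
    have "q x \<noteq> q y" using injq xX yX xy by (auto simp: inj_on_def)
    then consider "q x < q y" | "q y < q x" by linarith
    then show ?thesis
    proof cases
      case 1
      then have "lexL (\<lambda>z. of_int (e z) * 2 ^ band z) (\<lambda>z. - l z) q x y"
        using 3 ee bxy by (simp add: lexL_def)
      then show ?thesis by (rule disjI1)
    next
      case 2
      have S: "?R 0"
        using 2 3 ee by (intro setL_tie) auto
      show ?thesis by (rule disjI2, rule disjI1, rule bexI[where x=0], rule S) simp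
    qed
  next
    case 4
    show ?thesis by (rule Rx, rule Rx') (use 4 lx ly in auto)
  next
    case 5
    show ?thesis by (rule Ry, rule Ry') (use 5 lx ly in auto)
  next
    case 6
    show ?thesis
    proof (cases "band x = band y")
      case False
      then obtain b where b: "b < k" "bit (band x) b \<noteq> bit (band y) b" using bits xX yX by blast
      have S: "setL l r q (\<lambda>z. bit (band z) b = bit (band x) b) x y"
        using 6 b o1 o2 by (intro setL_in_out) auto
      show ?thesis by (rule disjI2, rule disjI2, rule exI[where x=b], rule conjI[OF b(1)], rule exI[where x="bit (band x) b"], rule S)
    next
      case True
      show ?thesis
      proof (cases "e x mod 3 = e y mod 3")
        case False
        show ?thesis by (rule Rx, rule setL_in_out) (use 6 False o1 o2 in auto)
      next
        case eq3: True
        define w :: real where "w = 2 ^ band y"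
        have w0: "w > 0" by (simp add: w_def)
        have wx: "2 ^ band x = w" using True by (simp add: w_def)
        have "r y - l y \<le> 2 * w" using bw yX by (simp add: w_def)
        then have "l x \<le> l y + 2 * w" using o1 by linarith
        then have "l x / w \<le> l y / w + 2" using w0 by (simp add: field_simps)
        then have "\<lceil>l x / w\<rceil> \<le> \<lceil>l y / w + 2\<rceil>" by (rule ceiling_mono)
        then have u: "e x \<le> e y + 2" by (simp add: e_def wx w_def)
        have "l y / w \<le> l x / w" using 6 w0 by (simp add: divide_right_mono)
        then have "\<lceil>l y / w\<rceil> \<le> \<lceil>l x / w\<rceil>" by (rule ceiling_mono)
        then have d: "e y \<le> e x" by (simp add: e_def wx w_def)
        have ee: "e x = e y" using u d eq3 by presburger
        have "lexL (\<lambda>z. of_int (e z) * 2 ^ band z) (\<lambda>z. - l z) q x y"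
          using 6 ee True by (simp add: lexL_def)
        then show ?thesis by (rule disjI1)
      qed
    qed
  qed
qed

lemma lin_asym: "linear_extension X P L \<Longrightarrow> x \<in> X \<Longrightarrow> y \<in> X \<Longrightarrow> L x y \<Longrightarrow> L y x \<Longrightarrow> False"
  unfolding linear_extension_def by blast

theorem theorem7p3:
  fixes X :: "'a set" and P :: "'a \<Rightarrow> 'a \<Rightarrow> bool" and t :: real
  assumes "t \<ge> 2"
    and "finite X"
    and "strict_poset X P"
    and "in_class_C X P 1 t"
  shows "real (poset_dim X P) \<le> 2 * real_of_int \<lceil>log 2 (log 2 t)\<rceil> + 4"
proof -
  obtain l r where rep: "interval_rep_len X P 1 t l r" using assms(4) in_class_C_def by blast
  have lr: "\<forall>z\<in>X. l z \<le> r z \<and> 1 \<le> r z - l z \<and> r z - l z \<le> t"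
    and Prel: "\<forall>x\<in>X. \<forall>y\<in>X. P x y \<longleftrightarrow> r x < l y"
    using rep unfolding interval_rep_len_def by auto
  obtain \<tau> :: "'a \<Rightarrow> nat" and n where "\<tau> ` X = {i. i < n}" "inj_on \<tau> X"
    using finite_imp_inj_to_nat_seg[OF assms(2)] by blast
  define q where "q = (\<lambda>z. real (\<tau> z))"
  have injq: "inj_on q X" using \<open>inj_on \<tau> X\<close> by (simp add: inj_on_def q_def)
  define k where "k = nat \<lceil>log 2 (log 2 t)\<rceil>"
  have tb: "t \<le> 2 ^ (2 ^ k)" using t_bound[OF assms(1)] by (simp add: k_def)
  define bf where "bf = (\<lambda>lam::real. SOME i::nat. i < 2^k \<and> 2^i \<le> lam \<and> lam \<le> 2^(Suc i))"
  define band where "band = (\<lambda>z. bf (r z - l z))"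
  have bandp: "band z < 2^k \<and> 2^band z \<le> r z - l z \<and> r z - l z \<le> 2 * 2^band z" if "z \<in> X" for z
  proof -
    have k1: "Suc (2^k - 1) = (2::nat)^k" by simp
    have "1 \<le> r z - l z" "r z - l z \<le> 2 ^ Suc (2^k - 1)" using lr that tb k1 by auto
    then have "\<exists>i<Suc (2^k - 1). 2^i \<le> r z - l z \<and> r z - l z \<le> 2^(Suc i)" by (rule band_exists)
    then have "\<exists>i::nat. i < 2^k \<and> 2^i \<le> r z - l z \<and> r z - l z \<le> 2^(Suc i)" using k1 by metis
    then have "band z < 2^k \<and> 2^band z \<le> r z - l z \<and> r z - l z \<le> 2^(Suc (band z))"
      unfolding band_def bf_def by (rule someI_ex)
    then show ?thesis by simp
  qed
  define e where "e = (\<lambda>z. \<lceil>l z / 2 ^ band z\<rceil>)"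
  define X1 where "X1 = lexL (\<lambda>z. of_int (e z) * 2 ^ band z) (\<lambda>z. - l z) q"
  define RR where "RR = (\<lambda>j::int. setL l r q (\<lambda>z. e z mod 3 = j))"
  define BB where "BB = (\<lambda>(b::nat, v::bool). setL l r q (\<lambda>z. bit (band z) b = v))"
  define Ls where "Ls = {X1} \<union> RR ` {0,1,2} \<union> BB ` ({..<k} \<times> UNIV)"
  have fin: "finite Ls" unfolding Ls_def by simp
  have card: "card Ls \<le> 2 * k + 4"
  proof -
    have c1: "card (RR ` {0,1,2}) \<le> 3"
      using card_image_le[of "{0,1,2::int}" RR] by simp
    have c2: "card (BB ` ({..<k} \<times> (UNIV::bool set))) \<le> 2 * k"
      using card_image_le[of "{..<k} \<times> (UNIV::bool set)" BB] by (simp add: card_cartesian_product)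
    have "card Ls \<le> card ({X1} \<union> RR ` {0,1,2}) + card (BB ` ({..<k} \<times> (UNIV::bool set)))"
      unfolding Ls_def by (rule card_Un_le)
    also have "card ({X1} \<union> RR ` {0,1,2}) \<le> card {X1} + card (RR ` {0,1,2})" by (rule card_Un_le)
    finally show ?thesis using c1 c2 by simp
  qed
  have extX1: "linear_extension X P X1"
    unfolding X1_def
  proof (rule lexL_ext[OF _ injq Prel], intro ballI conjI)
    fix z assume z: "z \<in> X"
    define w :: real where "w = 2 ^ band z"
    have w0: "w > 0" by (simp add: w_def)
    have wl: "w \<le> r z - l z" using bandp[OF z] by (simp add: w_def)
    have a: "l z / w \<le> of_int \<lceil>l z / w\<rceil>" by (rule le_of_int_ceiling)
    have b: "of_int \<lceil>l z / w\<rceil> < l z / w + 1" using ceiling_correct[of "l z / w"] by linarith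
    show "l z \<le> of_int (e z) * 2 ^ band z"
    proof -
      have "l z / w * w \<le> of_int \<lceil>l z / w\<rceil> * w" by (rule mult_right_mono[OF a]) (use w0 in simp)
      then show ?thesis using w0 by (simp add: e_def w_def[symmetric])
    qed
    show "of_int (e z) * 2 ^ band z \<le> r z"
    proof -
      have "of_int \<lceil>l z / w\<rceil> * w < (l z / w + 1) * w" using b w0 by (rule mult_strict_right_mono)
      also have "\<dots> = l z + w" using w0 by (simp add: field_simps)
      finally show ?thesis using wl by (simp add: e_def w_def[symmetric])
    qed
  qed
  have lrX: "\<forall>z\<in>X. l z \<le> r z" using lr by auto
  have ext: "\<forall>L\<in>Ls. linear_extension X P L"
    unfolding Ls_def RR_def BB_def using extX1 setL_ext[OF lrX injq Prel] by auto
  have bits: "\<forall>x\<in>X. \<forall>y\<in>X. band x \<noteq> band y \<longrightarrow> (\<exists>b<k. bit (band x) b \<noteq> bit (band y) b)"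
    using bandp bits_differ by blast
  have covers: "\<exists>L\<in>Ls. L x y" if "x \<in> X" "y \<in> X" "x \<noteq> y" "l x \<le> r y" "l y \<le> r x" for x y
  proof -
    have "lexL (\<lambda>z. of_int (e z) * 2 ^ band z) (\<lambda>z. - l z) q x y
     \<or> (\<exists>j\<in>{0,1,2::int}. setL l r q (\<lambda>z. e z mod 3 = j) x y)
     \<or> (\<exists>b<k. \<exists>v. setL l r q (\<lambda>z. bit (band z) b = v) x y)"
    proof (rule core[where e=e and X=X])
      show "\<forall>z. e z = \<lceil>l z / 2 ^ band z\<rceil>" by (simp add: e_def)
      show "\<forall>z\<in>X. 1 \<le> r z - l z" using lr by auto
      show "\<forall>z\<in>X. 2 ^ band z \<le> r z - l z \<and> r z - l z \<le> 2 * 2 ^ band z" using bandp by auto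
      show "\<forall>x\<in>X. \<forall>y\<in>X. r x - l x = r y - l y \<longrightarrow> band x = band y" by (simp add: band_def)
    qed (use that injq bits in auto)
    then have "X1 x y \<or> (\<exists>j\<in>{0,1,2::int}. RR j x y) \<or> (\<exists>b<k. \<exists>v. BB (b, v) x y)"
      unfolding X1_def RR_def BB_def by simp
    then show ?thesis unfolding Ls_def by blast
  qed
  have real: "realizer X P Ls"
    unfolding realizer_def
  proof (intro conjI ballI iffI)
    show "linear_extension X P L" if "L \<in> Ls" for L using ext that by blast
  next
    fix x y L assume "x \<in> X" "y \<in> X" "P x y" "L \<in> Ls"
    then show "L x y" using ext unfolding linear_extension_def by blast
  next
    fix x y assume x: "x \<in> X" and y: "y \<in> X" and all: "\<forall>L\<in>Ls. L x y"
    have X1in: "X1 \<in> Ls" unfolding Ls_def by simp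
    show "P x y"
    proof (rule ccontr)
      assume nP: "\<not> P x y"
      show False
      proof (cases "x = y")
        case True
        then show False using all X1in extX1 x unfolding linear_extension_def by blast
      next
        case False
        show False
        proof (cases "r y < l x")
          case True
          then have "P y x" using Prel x y by blast
          then have "X1 y x" using extX1 x y unfolding linear_extension_def by blast
          then show False using lin_asym[OF extX1 x y] all X1in by blast
        next
          case False2: False
          have "l y \<le> r x" using nP Prel x y by auto
          moreover have "l x \<le> r y" using False2 by simp
          ultimately obtain L where "L \<in> Ls" "L y x" using covers[OF y x] False by metis
          then show False using lin_asym[of X P L x y] ext x y all by blast
        qed
      qed
    qed
  qed
  have "poset_dim X P \<le> card Ls"
    unfolding poset_dim_def by (rule Least_le) (use fin real in blast)
  then have "poset_dim X P \<le> 2 * k + 4" using card by linarith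
  moreover have "real k = real_of_int \<lceil>log 2 (log 2 t)\<rceil>"
  proof -
    have "log 2 t \<ge> 1" using assms(1) by simp
    then have "log 2 (log 2 t) \<ge> 0" by simp
    then show ?thesis by (simp add: k_def)
  qed
  ultimately show ?thesis
    by (metis (mono_tags) of_nat_le_iff of_nat_add of_nat_mult of_nat_numeral)
qed

end
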